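(* Let $k\ge r\ge3$ and $m\ge0$ be integers. Let $\pi$ be a partition in $\mathbb{C}(k,r)$ with no odd parts, and let $N_2=N_2(\pi)$ be the number of parts marked $2$ in $GG(\pi)$. Then $\pi\in\mathbb{C}_{<}(k,r|m)$ if and only if $m\ge N_2$.
   Context: A partition $\pi=(\pi_1,\dots,\pi_\ell)$ is a finite non-increasing sequence of positive integers; "$a$ occurs in $\pi$" means $a=\pi_i$ for some $i$. Göllnitz–Gordon marking: $GG(\pi)$ assigns a positive integer (mark) to each part, processing the parts from smallest to largest; $\pi_i$ receives the smallest positive integer different from the marks of all parts $\pi_g$ with $g>i$ and $\pi_i-\pi_g\le 2$, where $\pi_i-\pi_g<2$ is required when $\pi_i$ is odd. An "$r$-marked part $a$" is a part equal to $a$ with mark $r$. $N_i(\pi)$ is the number of parts with mark $i$; $\pi^{(i)}_1\ge\dots\ge\pi^{(i)}_{N_i(\pi)}$ are the parts with mark $i$, with $\pi^{(i)}_0=+\infty$, $\pi^{(i)}_{N_i(\pi)+1}=-\infty$. $\mathbb{C}(k,r)$: partitions with (i) no odd part repeated; (ii) $\pi_i\ge\pi_{i+k-1}+2$ for $1\le i\le\ell-k+1$, strict if $\pi_i$ even; (iii) at most $r-1$ parts $\le 2$. Starting types: for $\pi\in\mathbb{C}(k,r)$ with $N_2=N_2(\pi)\ge1$, let $l$ be the largest integer in $\{0,\dots,N_2\}$ such that no odd part of $\pi$ is $\ge\pi^{(2)}_l$; for $l<i\le N_2$, $\pi^{(2)}_i$ has type $s_{-1}$. For $b=1,\dots,l$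 in increasing order, type and auxiliary $\sigma_b$: for $b=1$: Case 1: 1-marked part $\pi^{(2)}_1-1$ exists and $\pi^{(2)}_1+2$ does not occur: type $s_0$, $\sigma_1=\pi^{(2)}_1-1$; Case 2: 1-marked $\pi^{(2)}_1-2$ exists and $\pi^{(2)}_1+2$ does not occur: type $s_1$, $\sigma_1=\pi^{(2)}_1-2$; Case 3: 1-marked $\pi^{(2)}_1+2$ exists: type $s_2$, $\sigma_1=\pi^{(2)}_1+2$; Case 4: 1-marked $\pi^{(2)}_1$ exists: type $s_3$, $\sigma_1=\pi^{(2)}_1$. For $2\le b\le l$: Case 1: 1-marked $\pi^{(2)}_b-1$ exists and, if a 1-marked $\pi^{(2)}_b+2$ exists, $\sigma_{b-1}=\pi^{(2)}_b+2$: type $s_0$, $\sigma_b=\pi^{(2)}_b-1$; Case 2: same with $\pi^{(2)}_b-2$: type $s_1$, $\sigma_b=\pi^{(2)}_b-2$; Case 3: 1-marked $\pi^{(2)}_b+2$ exists and $\sigma_{b-1}\ne\pi^{(2)}_b+2$: type $s_2$, $\sigma_b=\pi^{(2)}_b+2$; Case 4: 1-marked $\pi^{(2)}_b$ exists: type $s_3$, $\sigma_b=\pi^{(2)}_b$. $\mathbb{C}_{<}(k,r|p,t)$ (for $p,t\ge 0$): the set of $\pi\in\mathbb{C}(k,r)$ such that (1) no odd part is $\ge 2t+1$; (2) $\pi^{(2)}_{p+1}<2t+1<\pi^{(2)}_p$ (in particular $p\le N_2(\pi)$); (3) if $\pi^{(2)}_p=2t+2$ then it is of starting type $s_2$ or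 $s_3$; (4) if $\pi^{(2)}_{p+1}=2t$ then it is of starting type $s_0$ or $s_1$. For $m\ge0$, $\mathbb{C}_{<}(k,r|m)=\bigcup_{p,t\ge0,\ p+t=m}\mathbb{C}_{<}(k,r|p,t)$. *)

theory Defs
  imports Main
begin

text \<open>A partition is a list of positive naturals in non-increasing order;
  list position j (0-based) holds the part pi_{j+1}.\<close>

definition is_partition :: "nat list \<Rightarrow> bool" where
  "is_partition pi \<longleftrightarrow> sorted_wrt (\<ge>) pi \<and> (\<forall>x\<in>set pi. 0 < x)"

text \<open>Goellnitz-Gordon marking. Parts are processed from smallest to largest;
  the accumulator holds (part, mark) pairs of the already processed (smaller-index-later) parts.\<close>

definition gg_step :: "(nat \<times> nat) list \<Rightarrow> nat \<Rightarrow> (nat \<times> nat) list" where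
  "gg_step acc x = acc @ [(x, LEAST r. 0 < r \<and>
      r \<notin> {m. \<exists>y. (y, m) \<in> set acc \<and> x - y \<le> 2 \<and> (odd x \<longrightarrow> x - y < 2)})]"

definition gg_marks :: "nat list \<Rightarrow> nat list" where
  "gg_marks pi = rev (map snd (foldl gg_step [] (rev pi)))"

definition marked_parts :: "nat list \<Rightarrow> nat \<Rightarrow> nat list" where
  "marked_parts pi i = [fst q. q \<leftarrow> zip pi (gg_marks pi), snd q = i]"

definition N_mark :: "nat list \<Rightarrow> nat \<Rightarrow> nat" where
  "N_mark pi i = length (marked_parts pi i)"

definition mpart :: "nat list \<Rightarrow> nat \<Rightarrow> nat \<Rightarrow> nat" where
  "mpart pi i j = marked_parts pi i ! (j - 1)"

definition has_marked :: "nat list \<Rightarrow> nat \<Rightarrow> nat \<Rightarrow> bool" where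
  "has_marked pi r a \<longleftrightarrow> (a, r) \<in> set (zip pi (gg_marks pi))"

definition in_C :: "nat \<Rightarrow> nat \<Rightarrow> nat list \<Rightarrow> bool" where
  "in_C k r pi \<longleftrightarrow> is_partition pi
     \<and> (\<forall>i j. i < length pi \<and> j < length pi \<and> i \<noteq> j \<and> odd (pi ! i) \<longrightarrow> pi ! i \<noteq> pi ! j)
     \<and> (\<forall>i. i + k - 1 < length pi \<longrightarrow>
           (if even (pi ! i) then pi ! i > pi ! (i + k - 1) + 2 else pi ! i \<ge> pi ! (i + k - 1) + 2))
     \<and> length (filter (\<lambda>x. x \<le> 2) pi) \<le> r - 1"

datatype stype = S_m1 | S0 | S1 | S2 | S3

text \<open>Starting type and auxiliary sigma_b for b = 1..l (computed recursively);
  cases are tried in the order 1,2,3,4. None if no case applies.\<close>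
fun start_info :: "nat list \<Rightarrow> nat \<Rightarrow> (stype \<times> nat) option" where
  "start_info pi 0 = None"
| "start_info pi (Suc b) =
    (let a = mpart pi 2 (Suc b); one = has_marked pi 1;
         occ = (\<lambda>x. x \<in> set pi) in
     if b = 0 then
       (if one (a - 1) \<and> \<not> occ (a + 2) then Some (S0, a - 1)
        else if one (a - 2) \<and> \<not> occ (a + 2) then Some (S1, a - 2)
        else if one (a + 2) then Some (S2, a + 2)
        else if one a then Some (S3, a)
        else None)
     else
       (case start_info pi b of
          None \<Rightarrow> None
        | Some (_, s) \<Rightarrow>
            (if one (a - 1) \<and> (one (a + 2) \<longrightarrow> s = a + 2) then Some (S0, a - 1)
             else if one (a - 2) \<and> (one (a + 2) \<longrightarrow> s = a + 2) then Some (S1, a - 2)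
             else if one (a + 2) \<and> s \<noteq> a + 2 then Some (S2, a + 2)
             else if one a then Some (S3, a)
             else None)))"

text \<open>The integer l: largest l in {0..N_2} with no odd part >= pi^{(2)}_l (pi^{(2)}_0 = infinity).\<close>
definition l_index :: "nat list \<Rightarrow> nat" where
  "l_index pi = (GREATEST l. l \<le> N_mark pi 2 \<and>
      (l = 0 \<or> (\<forall>x\<in>set pi. odd x \<longrightarrow> x < mpart pi 2 l)))"

definition start_type :: "nat list \<Rightarrow> nat \<Rightarrow> stype option" where
  "start_type pi b = (if l_index pi < b then Some S_m1 else map_option fst (start_info pi b))"

definition in_C_lt_pt :: "nat \<Rightarrow> nat \<Rightarrow> nat \<Rightarrow> nat \<Rightarrow> nat list \<Rightarrow> bool" where
  "in_C_lt_pt k r p t pi \<longleftrightarrow> in_C k r pi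
     \<and> (\<forall>x\<in>set pi. odd x \<longrightarrow> x < 2 * t + 1)
     \<and> p \<le> N_mark pi 2
     \<and> (p + 1 > N_mark pi 2 \<or> mpart pi 2 (p + 1) < 2 * t + 1)
     \<and> (p = 0 \<or> 2 * t + 1 < mpart pi 2 p)
     \<and> (1 \<le> p \<and> mpart pi 2 p = 2 * t + 2 \<longrightarrow> start_type pi p \<in> {Some S2, Some S3})
     \<and> (p + 1 \<le> N_mark pi 2 \<and> mpart pi 2 (p + 1) = 2 * t \<longrightarrow>
          start_type pi (p + 1) \<in> {Some S0, Some S1})"

definition in_C_lt :: "nat \<Rightarrow> nat \<Rightarrow> nat \<Rightarrow> nat list \<Rightarrow> bool" where
  "in_C_lt k r m pi \<longleftrightarrow> (\<exists>p t. p + t = m \<and> in_C_lt_pt k r p t pi)"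

end

theory Submission
  imports Defs
begin

definition mk :: "nat \<Rightarrow> (nat \<times> nat) list \<Rightarrow> nat" where
  "mk x Z = (LEAST r. 0 < r \<and> r \<notin> {m. \<exists>y. (y, m) \<in> set Z \<and> x - y \<le> 2 \<and> (odd x \<longrightarrow> x - y < 2)})"

lemma F_fst: "map fst (foldl gg_step acc ys) = map fst acc @ ys"
  by (induction ys arbitrary: acc) (simp_all add: gg_step_def)

lemma gg_marks_Nil: "gg_marks [] = []" by (simp add: gg_marks_def)

lemma gg_marks_len: "length (gg_marks xs) = length xs"
proof -
  have "length (map fst (foldl gg_step [] (rev xs))) = length xs" by (simp add: F_fst)
  then show ?thesis by (simp add: gg_marks_def)
qed

lemma gg_marks_Cons: "gg_marks (x#xs) = mk x (zip xs (gg_marks xs)) # gg_marks xs"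
proof -
  define F where "F = foldl gg_step [] (rev xs)"
  have f1: "map fst F = rev xs" unfolding F_def by (simp add: F_fst)
  have "F = zip (map fst F) (map snd F)" by (simp add: zip_map_fst_snd)
  also have "\<dots> = zip (rev xs) (rev (rev (map snd F)))" using f1 by simp
  also have "\<dots> = rev (zip xs (rev (map snd F)))"
    using f1 by (subst zip_rev) (auto dest: arg_cong[where f=length])
  finally have eq: "F = rev (zip xs (rev (map snd F)))" .
  have "set F = set (rev (zip xs (rev (map snd F))))" by (rule arg_cong[OF eq])
  also have "\<dots> = set (zip xs (gg_marks xs))" by (simp add: gg_marks_def F_def)
  finally have "set F = set (zip xs (gg_marks xs))" .
  then show ?thesis
    by (simp add: gg_marks_def gg_step_def mk_def F_def[symmetric])
qed

lemma mk_pos: "0 < mk x Z"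
proof -
  let ?S = "{m. \<exists>y. (y, m) \<in> set Z \<and> x - y \<le> 2 \<and> (odd x \<longrightarrow> x - y < 2)}"
  have "finite ?S" by (rule finite_subset[of _ "snd ` set Z"]) force+
  then obtain r where "r \<notin> insert 0 ?S"
    using ex_new_if_finite[OF infinite_UNIV_nat] by (meson finite_insert)
  then have "r \<notin> ?S" "r > 0" by auto
  then show ?thesis unfolding mk_def by (metis (no_types, lifting) LeastI)
qed

lemma mk_notin: "(y, mk x Z) \<in> set Z \<Longrightarrow> \<not> (x - y \<le> 2 \<and> (odd x \<longrightarrow> x - y < 2))"
proof -
  let ?S = "{m. \<exists>y. (y, m) \<in> set Z \<and> x - y \<le> 2 \<and> (odd x \<longrightarrow> x - y < 2)}"
  have "finite ?S" by (rule finite_subset[of _ "snd ` set Z"]) force+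
  then obtain r where "r \<notin> insert 0 ?S"
    using ex_new_if_finite[OF infinite_UNIV_nat] by (meson finite_insert)
  then have "r \<notin> ?S" "r > 0" by auto
  then have "mk x Z \<notin> ?S" unfolding mk_def by (metis (no_types, lifting) LeastI)
  then show "(y, mk x Z) \<in> set Z \<Longrightarrow> ?thesis" by blast
qed

lemma mk_ne1: "mk x Z \<noteq> 1 \<Longrightarrow> \<exists>y. (y, 1) \<in> set Z \<and> x - y \<le> 2 \<and> (odd x \<longrightarrow> x - y < 2)"
proof (rule ccontr)
  assume a: "mk x Z \<noteq> 1" "\<not> (\<exists>y. (y, 1) \<in> set Z \<and> x - y \<le> 2 \<and> (odd x \<longrightarrow> x - y < 2))"
  then have "mk x Z \<le> 1" unfolding mk_def by (intro Least_le) auto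
  with mk_pos[of x Z] a(1) show False by simp
qed

lemma zip_Cons_gg: "zip (x#xs) (gg_marks (x#xs)) = (x, mk x (zip xs (gg_marks xs))) # zip xs (gg_marks xs)"
  by (simp add: gg_marks_Cons)

lemma mp_sorted: "\<forall>x\<in>set pi. even x \<Longrightarrow> sorted_wrt (\<lambda>a b. a > b + 2) [fst q. q \<leftarrow> zip pi (gg_marks pi), snd q = c]"
proof (induction pi)
  case Nil then show ?case by (simp add: gg_marks_Nil)
next
  case (Cons x xs)
  show ?case
  proof (cases "mk x (zip xs (gg_marks xs)) = c")
    case True
    have "\<forall>y \<in> set [fst q. q \<leftarrow> zip xs (gg_marks xs), snd q = c]. x > y + 2"
    proof
      fix y assume "y \<in> set [fst q. q \<leftarrow> zip xs (gg_marks xs), snd q = c]"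
      then have "(y, mk x (zip xs (gg_marks xs))) \<in> set (zip xs (gg_marks xs))" using True by auto
      from mk_notin[OF this] Cons.prems show "x > y + 2" by auto
    qed
    then show ?thesis using Cons True by (auto simp add: zip_Cons_gg)
  next
    case False
    then show ?thesis using Cons by (auto simp add: zip_Cons_gg)
  qed
qed

lemma has1: "is_partition pi \<Longrightarrow> \<forall>x\<in>set pi. even x \<Longrightarrow> x \<in> set pi \<Longrightarrow>
   has_marked pi 1 x \<or> has_marked pi 1 (x - 2)"
proof (induction pi)
  case Nil then show ?case by simp
next
  case (Cons z xs)
  have ip: "is_partition xs" using Cons.prems(1) by (simp add: is_partition_def)
  have hm: "has_marked xs 1 a \<Longrightarrow> has_marked (z#xs) 1 a" for a
    by (simp add: has_marked_def zip_Cons_gg)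
  show ?case
  proof (cases "x = z")
    case True
    show ?thesis
    proof (cases "mk z (zip xs (gg_marks xs)) = 1")
      case True
      then show ?thesis using \<open>x = z\<close> by (simp add: has_marked_def zip_Cons_gg)
    next
      case False
      from mk_ne1[OF False] obtain y where y: "(y, 1) \<in> set (zip xs (gg_marks xs))" "z - y \<le> 2"
        by blast
      have yin: "y \<in> set xs" using y(1) by (meson set_zip_leftD)
      have "y \<le> z" using Cons.prems(1) yin by (simp add: is_partition_def)
      moreover have "even y" "even z" using Cons.prems(2) yin by auto
      ultimately have "y = z \<or> y = z - 2" using y(2)
        by presburger
      then have "has_marked xs 1 z \<or> has_marked xs 1 (z - 2)" using y(1) by (auto simp: has_marked_def)
      then show ?thesis using hm True by blast
    qed
  next
    case False
    then have "x \<in> set xs" using Cons.prems by simp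
    with Cons.IH ip Cons.prems(2) hm show ?thesis by auto
  qed
qed

lemma marked_in: "x \<in> set (marked_parts pi i) \<Longrightarrow> x \<in> set pi"
  by (auto simp: marked_parts_def dest: set_zip_leftD)

lemma has_in: "has_marked pi i x \<Longrightarrow> x \<in> set pi"
  by (auto simp: has_marked_def dest: set_zip_leftD)

lemma si_type: "start_info pi b = Some (s, v) \<Longrightarrow> s \<noteq> S_m1"
  by (cases b) (auto simp: Let_def split: if_splits option.splits)

lemma si_notNone:
  assumes ip: "is_partition pi" and ev: "\<forall>x\<in>set pi. even x"
  shows "1 \<le> b \<Longrightarrow> b \<le> N_mark pi 2 \<Longrightarrow> start_info pi b \<noteq> None"
proof (induction b)
  case 0 then show ?case by simp
next
  case (Suc b)
  define a where "a = mpart pi 2 (Suc b)"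
  have "a \<in> set (marked_parts pi 2)" using Suc.prems
    by (simp add: a_def mpart_def N_mark_def)
  then have ain: "a \<in> set pi" by (rule marked_in)
  then have "even a" "a > 0" using ev ip by (auto simp: is_partition_def)
  then have na1: "\<not> has_marked pi 1 (a - 1)" using ev has_in
    by (metis One_nat_def Suc_pred even_Suc)
  have h1: "has_marked pi 1 a \<or> has_marked pi 1 (a - 2)" using has1[OF ip ev ain] .
  have h2: "a + 2 \<in> set pi \<Longrightarrow> has_marked pi 1 (a + 2) \<or> has_marked pi 1 a"
    using has1[OF ip ev, of "a+2"] by simp
  show ?case
  proof (cases "b = 0")
    case True
    then have a0: "mpart pi 2 (Suc 0) = a" by (simp add: a_def)
    show ?thesis using na1 h1 h2 True by (auto simp add: Let_def a0)
  next
    case False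
    then obtain ty s where "start_info pi b = Some (ty, s)" using Suc by fastforce
    then show ?thesis using na1 h1 h2 False by (auto simp add: Let_def a_def[symmetric])
  qed
qed

lemma l_index_eq: "\<forall>x\<in>set pi. even x \<Longrightarrow> l_index pi = N_mark pi 2"
  unfolding l_index_def by (rule Greatest_equality) auto

lemma st_good:
  assumes ip: "is_partition pi" and ev: "\<forall>x\<in>set pi. even x" and "1 \<le> b" "b \<le> N_mark pi 2"
  shows "start_type pi b \<in> {Some S0, Some S1, Some S2, Some S3}"
proof -
  obtain ty s where e: "start_info pi b = Some (ty, s)" using si_notNone[OF ip ev assms(3,4)] by fastforce
  have "ty \<noteq> S_m1" using si_type[OF e] .
  then show ?thesis using e assms(4) l_index_eq[OF ev] by (cases ty) (auto simp: start_type_def)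
qed

lemma list_lb: "sorted_wrt (\<lambda>a b. a > b + 2) xs \<Longrightarrow> \<forall>x\<in>set xs. x \<ge> 2 \<Longrightarrow> j < length xs \<Longrightarrow>
  xs ! j \<ge> 2 * (length xs - j)"
proof (induction xs arbitrary: j)
  case Nil then show ?case by simp
next
  case (Cons x xs)
  show ?case
  proof (cases j)
    case 0
    show ?thesis
    proof (cases xs)
      case Nil then show ?thesis using Cons 0 by simp
    next
      case (Cons y ys)
      have "y \<ge> 2 * length xs" using Cons.IH[of 0] Cons.prems \<open>xs = y # ys\<close> by simp
      moreover have "x > y + 2" using Cons.prems \<open>xs = y # ys\<close> by simp
      ultimately show ?thesis using 0 \<open>xs = y # ys\<close> by simp
    qed
  next
    case (Suc j') then show ?thesis using Cons by simp
  qed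
qed

theorem theorem5p3:
  fixes k r m :: nat and pi :: "nat list"
  assumes "k \<ge> r" and "r \<ge> 3"
    and "in_C k r pi"
    and "\<forall>x\<in>set pi. even x"
  shows "in_C_lt k r m pi \<longleftrightarrow> m \<ge> N_mark pi 2"
proof -
  have ip: "is_partition pi" using assms(3) by (simp add: in_C_def)
  have ev: "\<forall>x\<in>set pi. even x" by fact
  define A where "A = marked_parts pi 2"
  define N where "N = N_mark pi 2"
  have NA: "N = length A" by (simp add: N_def A_def N_mark_def)
  have mpA: "mpart pi 2 j = A ! (j - 1)" for j by (simp add: mpart_def A_def)
  have sA: "sorted_wrt (\<lambda>a b. a > b + 2) A"
    using mp_sorted[OF ev, of 2] by (simp add: A_def marked_parts_def)
  have A2: "\<forall>x\<in>set A. x \<ge> 2"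
  proof
    fix x assume "x \<in> set A"
    then have "x \<in> set pi" by (simp add: A_def marked_in)
    then have "even x" "x > 0" using ev ip by (auto simp: is_partition_def)
    then show "x \<ge> 2" by presburger
  qed
  have lb: "j < N \<Longrightarrow> A ! j \<ge> 2 * (N - j)" for j using list_lb[OF sA A2] NA by simp
  have gap: "i < j \<Longrightarrow> j < N \<Longrightarrow> A ! i > A ! j + 2" for i j
    using sA NA by (simp add: sorted_wrt_iff_nth_less)
  have oddno: "\<forall>x\<in>set pi. odd x \<longrightarrow> x < 2 * t + 1" for t using ev by auto
  show ?thesis
  proof
    assume "in_C_lt k r m pi"
    then obtain p t where pt: "p + t = m" "in_C_lt_pt k r p t pi" by (auto simp: in_C_lt_def)
    then have c: "p \<le> N" "p + 1 > N \<or> A ! p < 2 * t + 1"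
      using mpA[of "p+1"] by (auto simp: in_C_lt_pt_def N_def)
    show "m \<ge> N_mark pi 2"
    proof (cases "p = N")
      case True then show ?thesis using pt N_def by simp
    next
      case False
      then have "p < N" using c by simp
      then have "A ! p \<ge> 2 * (N - p)" by (rule lb)
      then show ?thesis using c \<open>p < N\<close> pt N_def by simp
    qed
  next
    assume mN: "m \<ge> N_mark pi 2"
    then have mN': "m \<ge> N" by (simp add: N_def)
    define P where "P p \<longleftrightarrow> p \<le> N \<and> (p = 0 \<or> 2 * (m - p) + 1 < A ! (p - 1))" for p
    define p0 where "p0 = (GREATEST p. P p)"
    have P0: "P p0" unfolding p0_def by (rule GreatestI_nat[of P 0 N]) (auto simp: P_def)
    have Pn: "\<not> P (p0 + 1)"
    proof
      assume "P (p0 + 1)"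
      then have "p0 + 1 \<le> p0" unfolding p0_def by (rule Greatest_le_nat[of P _ N]) (auto simp: P_def)
      then show False by simp
    qed
    have p0N: "p0 \<le> N" using P0 P_def by simp
    have up: "p0 < N \<Longrightarrow> A ! p0 < 2 * (m - p0)"
      using Pn P_def mN' by auto
    have low: "p0 = 0 \<or> 2 * (m - p0) + 1 < A ! (p0 - 1)" using P0 P_def by simp
    have inC: "in_C k r pi" by fact
    have st: "1 \<le> b \<Longrightarrow> b \<le> N \<Longrightarrow> start_type pi b \<in> {Some S0, Some S1, Some S2, Some S3}" for b
      using st_good[OF ip ev] N_def by blast
    show "in_C_lt k r m pi"
    proof (cases "p0 \<ge> 1 \<and> A ! (p0 - 1) = 2 * (m - p0) + 2 \<and> start_type pi p0 \<notin> {Some S2, Some S3}")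
      case False
      have c3: "p0 + 1 > N \<or> A ! p0 < 2 * (m - p0) + 1" using up by (cases "p0 < N") auto
      have c4: "\<not> (p0 + 1 \<le> N \<and> A ! p0 = 2 * (m - p0))" using up by auto
      have c6: "1 \<le> p0 \<and> A ! (p0 - 1) = 2 * (m - p0) + 2 \<longrightarrow> start_type pi p0 \<in> {Some S2, Some S3}"
        using False by auto
      have "in_C_lt_pt k r p0 (m - p0) pi"
        unfolding in_C_lt_pt_def mpA N_def[symmetric] using inC oddno p0N c3 c4 low c6
        by auto
      then show ?thesis unfolding in_C_lt_def using p0N mN' by (intro exI[of _ p0] exI[of _ "m - p0"]) auto
    next
      case True
      then have ty: "start_type pi p0 \<in> {Some S0, Some S1}" using st[of p0] p0N by auto
      have g2: "p0 \<ge> 2 \<Longrightarrow> A ! (p0 - 2) > A ! (p0 - 1) + 2" using gap[of "p0 - 2" "p0 - 1"] p0N by simp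
      have e0: "p0 - 1 + 1 = p0" using True by simp
      have e2: "mpart pi 2 (p0 - 1) = A ! (p0 - 2)" using mpA by (simp add: numeral_2_eq_2)
      have d3: "A ! (p0 - 1) < 2 * (m - p0 + 1) + 1" using True by simp
      have d5: "p0 - 1 = 0 \<or> 2 * (m - p0 + 1) + 1 < A ! (p0 - 2)"
        proof (cases "p0 \<ge> 2")
          case True2: True
          then show ?thesis using g2[OF True2] True by simp
        qed simp
      have d6: "\<not> (1 \<le> p0 - 1 \<and> A ! (p0 - 2) = 2 * (m - p0 + 1) + 2)"
        proof (cases "p0 \<ge> 2")
          case True2: True
          then show ?thesis using g2[OF True2] True by simp
        qed simp
      have d8: "A ! (p0 - 1) = 2 * (m - p0 + 1)" using True by simp
      have "in_C_lt_pt k r (p0 - 1) (m - p0 + 1) pi"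
        unfolding in_C_lt_pt_def e0 e2 N_def[symmetric] mpA[of p0]
        using inC oddno[of "m - p0 + 1"] p0N True ty d3 d5 d6 d8 by auto
      then show ?thesis unfolding in_C_lt_def using p0N mN' True
        by (intro exI[of _ "p0 - 1"] exI[of _ "m - p0 + 1"]) auto
    qed
  qed
qed

end
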